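(* For any planar graph $G$, if $\mathcal{B}=\{N[v]\mid v\in V(G)\}$, then NCTD$^+(\mathcal{B})\le 7$.
   Context: $N[v]$ is the closed neighborhood of $v$. A positive teaching map for $\mathcal{B}$ assigns to each $B\in\mathcal{B}$ a set $T(B)\subseteq B$. A vertex $w$ distinguishes $B,B'$ if $w$ lies in exactly one of them. $T$ is non-clashing if for all distinct $B,B'\in\mathcal{B}$ some $w\in T(B)\cup T(B')$ distinguishes them; its size is $\max_{B\in\mathcal{B}}|T(B)|$. NCTD$^+(\mathcal{B})$ is the minimum size of a positive non-clashing teaching map for $\mathcal{B}$. *)

theory Defs
  imports "HOL-Analysis.Analysis"
begin

definition simple_graph :: "'a set \<Rightarrow> 'a set set \<Rightarrow> bool" where
  "simple_graph V E \<longleftrightarrow> finite V \<and>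
     (\<forall>e\<in>E. \<exists>u v. u \<in> V \<and> v \<in> V \<and> u \<noteq> v \<and> e = {u, v})"

definition planar_graph :: "'a set \<Rightarrow> 'a set set \<Rightarrow> bool" where
  "planar_graph V E \<longleftrightarrow> simple_graph V E \<and>
     (\<exists>(p :: 'a \<Rightarrow> complex) (\<gamma> :: 'a set \<Rightarrow> real \<Rightarrow> complex).
        inj_on p V \<and>
        (\<forall>e\<in>E. arc (\<gamma> e) \<and>
           (\<exists>u v. e = {u, v} \<and> pathstart (\<gamma> e) = p u \<and> pathfinish (\<gamma> e) = p v) \<and>
           path_image (\<gamma> e) \<inter> p ` V \<subseteq> p ` e) \<and>
        (\<forall>e\<in>E. \<forall>f\<in>E. e \<noteq> f \<longrightarrow> path_image (\<gamma> e) \<inter> path_image (\<gamma> f) \<subseteq> p ` (e \<inter> f)))"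

definition closed_nbhd :: "'a set set \<Rightarrow> 'a \<Rightarrow> 'a set" where
  "closed_nbhd E v = insert v {u. {u, v} \<in> E}"

definition positive_teaching_map :: "'a set set \<Rightarrow> ('a set \<Rightarrow> 'a set) \<Rightarrow> bool" where
  "positive_teaching_map \<B> T \<longleftrightarrow> (\<forall>B\<in>\<B>. T B \<subseteq> B)"

definition distinguishes :: "'a \<Rightarrow> 'a set \<Rightarrow> 'a set \<Rightarrow> bool" where
  "distinguishes w B B' \<longleftrightarrow> (w \<in> B) \<noteq> (w \<in> B')"

definition non_clashing :: "'a set set \<Rightarrow> ('a set \<Rightarrow> 'a set) \<Rightarrow> bool" where
  "non_clashing \<B> T \<longleftrightarrow>
     (\<forall>B\<in>\<B>. \<forall>B'\<in>\<B>. B \<noteq> B' \<longrightarrow> (\<exists>w \<in> T B \<union> T B'. distinguishes w B B'))"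

definition NCTD_pos :: "'a set set \<Rightarrow> nat" where
  "NCTD_pos \<B> = (LEAST k. \<exists>T. positive_teaching_map \<B> T \<and> non_clashing \<B> T \<and>
                            (\<forall>B\<in>\<B>. card (T B) \<le> k))"

end

theory Submission
  imports Defs
begin


definition arcset :: "complex \<Rightarrow> complex \<Rightarrow> complex set \<Rightarrow> bool" where
  "arcset a b A \<longleftrightarrow> (\<exists>g. arc g \<and> pathstart g = a \<and> pathfinish g = b \<and> path_image g = A)"

lemma arcset_ends: "arcset a b A \<Longrightarrow> a \<in> A \<and> b \<in> A"
  unfolding arcset_def by auto

lemma arcset_compact: "arcset a b A \<Longrightarrow> compact A"
  unfolding arcset_def by (auto intro: compact_path_image arc_imp_path)

lemma arcset_connected: "arcset a b A \<Longrightarrow> connected A"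
  unfolding arcset_def by (auto intro: connected_path_image arc_imp_path)

lemma arcset_interior_connected:
  assumes "arcset a b A" shows "connected (A - {a,b})"
proof -
  obtain g where g: "arc g" "pathstart g = a" "pathfinish g = b" "path_image g = A"
    using assms unfolding arcset_def by blast
  have inj: "inj_on g {0..1}" and cont: "continuous_on {0..1} g"
    using g(1) by (auto simp: arc_def path_def)
  have "A - {a,b} = g ` {0<..<1}"
  proof
    show "A - {a, b} \<subseteq> g ` {0<..<1}"
    proof
      fix x assume x: "x \<in> A - {a,b}"
      then obtain t where t: "t \<in> {0..1}" "x = g t" using g(4) by (auto simp: path_image_def)
      have "t \<noteq> 0" using x t g(2) by (auto simp: pathstart_def)
      moreover have "t \<noteq> 1" using x t g(3) by (auto simp: pathfinish_def)
      ultimately show "x \<in> g ` {0<..<1}" using t by auto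
    qed
  next
    show "g ` {0<..<1} \<subseteq> A - {a, b}"
    proof
      fix x assume "x \<in> g ` {0<..<1}"
      then obtain t where t: "t \<in> {0<..<1}" "x = g t" by auto
      have "x \<in> A" using t g(4) by (auto simp: path_image_def)
      moreover have "g t \<noteq> g 0"
      proof
        assume "g t = g 0" then have "t = 0" using inj t by (intro inj_onD[OF inj]) auto
        then show False using t by auto
      qed
      moreover have "g t \<noteq> g 1"
      proof
        assume "g t = g 1" then have "t = 1" using inj t by (intro inj_onD[OF inj]) auto
        then show False using t by auto
      qed
      ultimately show "x \<in> A - {a,b}" using t g(2,3) by (auto simp: pathstart_def pathfinish_def)
    qed
  qed
  moreover have "connected (g ` {0<..<1})"
    by (rule connected_continuous_image) (auto intro: continuous_on_subset[OF cont])
  ultimately show ?thesis by simp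
qed

lemma cycle_facts:
  assumes A: "arcset a b A" and B: "arcset a b B" and AB: "A \<inter> B = {a,b}" and ab: "a \<noteq> b"
  shows "inside (A \<union> B) \<noteq> {}" "connected (inside (A \<union> B))" "connected (outside (A \<union> B))"
        "\<not> bounded (outside (A \<union> B))"
        "closure (inside (A \<union> B)) = inside (A \<union> B) \<union> (A \<union> B)"
        "closure (outside (A \<union> B)) = outside (A \<union> B) \<union> (A \<union> B)"
proof -
  obtain g1 where g1: "arc g1" "pathstart g1 = a" "pathfinish g1 = b" "path_image g1 = A"
    using A unfolding arcset_def by blast
  obtain g2 where g2: "arc g2" "pathstart g2 = a" "pathfinish g2 = b" "path_image g2 = B"
    using B unfolding arcset_def by blast
  define c where "c = g1 +++ reversepath g2"
  have sp: "simple_path c" unfolding c_def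
    by (rule simple_path_join_loop) (use g1 g2 AB in \<open>auto intro: arc_reversepath\<close>)
  have loop: "pathfinish c = pathstart c" using g1 g2 by (simp add: c_def)
  have pi: "path_image c = A \<union> B" using g1 g2
    by (simp add: c_def path_image_join path_image_reversepath)
  note J = Jordan_inside_outside[OF sp loop, unfolded pi]
  show "inside (A \<union> B) \<noteq> {}" "connected (inside (A \<union> B))" "connected (outside (A \<union> B))"
        "\<not> bounded (outside (A \<union> B))" using J by auto
  show "closure (inside (A \<union> B)) = inside (A \<union> B) \<union> (A \<union> B)"
    using J by (simp add: closure_Un_frontier)
  show "closure (outside (A \<union> B)) = outside (A \<union> B) \<union> (A \<union> B)"
    using J by (simp add: closure_Un_frontier)
qed

lemma side_inside:
  assumes "connected D" "D \<inter> S = {}" "x \<in> D" "y \<in> D"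
  shows "x \<in> inside S \<longleftrightarrow> y \<in> inside S"
proof -
  have "D \<subseteq> connected_component_set (- S) x"
    using assms by (intro connected_component_maximal) auto
  then have "connected_component_set (- S) y = connected_component_set (- S) x"
    using assms(4) by (intro connected_component_eq) auto
  then show ?thesis using assms by (auto simp: inside_def)
qed

lemma subset_outside:
  assumes "connected U" "\<not> bounded U" "U \<inter> S = {}"
  shows "U \<subseteq> outside S"
proof
  fix y assume y: "y \<in> U"
  have "U \<subseteq> connected_component_set (- S) y"
    using assms y by (intro connected_component_maximal) auto
  then have "\<not> bounded (connected_component_set (- S) y)"
    using assms(2) bounded_subset by blast
  then show "y \<in> outside S" by (simp add: outside)
qed

definition theta :: "complex \<Rightarrow> complex \<Rightarrow> complex set \<Rightarrow> complex set \<Rightarrow> complex set \<Rightarrow> bool" where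
  "theta a b A1 A2 A3 \<longleftrightarrow> a \<noteq> b \<and> arcset a b A1 \<and> arcset a b A2 \<and> arcset a b A3 \<and>
     A1 \<inter> A2 = {a,b} \<and> A1 \<inter> A3 = {a,b} \<and> A2 \<inter> A3 = {a,b}"

lemma theta_perm:
  assumes "theta a b A1 A2 A3"
  shows "theta a b A2 A1 A3" "theta a b A1 A3 A2" "theta a b A2 A3 A1"
  using assms unfolding theta_def by (auto simp: Int_commute)

lemma theta_J:
  assumes th: "theta a b A1 A2 A3" and x: "x \<notin> A1 \<union> A2 \<union> A3" and xi: "x \<in> inside (A1 \<union> A2)"
  shows "x \<in> inside (A1 \<union> A3) \<or> x \<in> inside (A2 \<union> A3)"
proof (rule ccontr)
  assume "\<not> ?thesis"
  then have xo: "x \<in> outside (A1 \<union> A3)" "x \<in> outside (A2 \<union> A3)"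
    using x inside_Un_outside by blast+
  have ar: "a \<noteq> b" "arcset a b A1" "arcset a b A2" "arcset a b A3"
     "A1 \<inter> A2 = {a,b}" "A1 \<inter> A3 = {a,b}" "A2 \<inter> A3 = {a,b}"
    using th unfolding theta_def by auto
  have cpt: "compact A1" "compact A2" "compact A3" using ar arcset_compact by auto
  have "bounded (- outside (A1 \<union> A2) \<union> - outside (A1 \<union> A3) \<union> - outside (A2 \<union> A3))"
    using cpt by (simp add: cobounded_outside compact_imp_bounded)
  then have "\<not> UNIV \<subseteq> - outside (A1 \<union> A2) \<union> - outside (A1 \<union> A3) \<union> - outside (A2 \<union> A3)"
    using not_bounded_UNIV bounded_subset by blast
  then obtain z where z: "z \<in> outside (A1 \<union> A2)" "z \<in> outside (A1 \<union> A3)" "z \<in> outside (A2 \<union> A3)"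
    by blast
  have c13: "connected_component (- (A1 \<union> A3)) x z"
    using cycle_facts(3)[OF ar(2,4,6,1)] xo z
    by (intro connected_componentI[of "outside (A1 \<union> A3)"]) (auto simp: outside_def)
  have c23: "connected_component (- (A2 \<union> A3)) x z"
    using cycle_facts(3)[OF ar(3,4,7,1)] xo z
    by (intro connected_componentI[of "outside (A2 \<union> A3)"]) (auto simp: outside_def)
  have int: "(A1 \<union> A3) \<inter> (A2 \<union> A3) = A3" using ar arcset_ends by blast
  have "connected_component (- ((A1 \<union> A3) \<union> (A2 \<union> A3))) x z"
    by (rule Janiszewski[OF _ _ _ c13 c23]) (use cpt int ar arcset_connected in \<open>auto intro: compact_imp_closed\<close>)
  then have "connected_component (- (A1 \<union> A2)) x z"
    by (rule connected_component_of_subset) auto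
  then have "connected_component_set (- (A1 \<union> A2)) z = connected_component_set (- (A1 \<union> A2)) x"
    by (intro connected_component_eq) auto
  then have "x \<in> outside (A1 \<union> A2)" using z(1) by (simp add: outside)
  then show False using xi inside_Int_outside by blast
qed

lemma theta_facts:
  assumes "theta a b A1 A2 A3"
  shows "a \<noteq> b" "arcset a b A1" "arcset a b A2" "arcset a b A3"
     "A1 \<inter> A2 = {a,b}" "A1 \<inter> A3 = {a,b}" "A2 \<inter> A3 = {a,b}"
     "a \<in> A1" "b \<in> A1" "a \<in> A2" "b \<in> A2" "a \<in> A3" "b \<in> A3"
  using assms arcset_ends unfolding theta_def by auto

lemma in_inside_not: "x \<in> inside S \<Longrightarrow> x \<notin> S"
  by (auto simp: inside_def)
lemma in_outside_not: "x \<in> outside S \<Longrightarrow> x \<notin> S"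
  by (auto simp: outside_def)
lemma in_inside_outside: "x \<in> inside S \<Longrightarrow> x \<notin> outside S"
  using inside_Int_outside by blast

lemma theta_int3: "theta a b A1 A2 A3 \<Longrightarrow> (A3 - {a,b}) \<inter> (A1 \<union> A2) = {}"
  unfolding theta_def by blast

lemma theta_A:
  assumes th: "theta a b A1 A2 A3" and m3: "m3 \<in> A3 - {a,b}" and m2: "m2 \<in> A2 - {a,b}"
    and in3: "m3 \<in> inside (A1 \<union> A2)"
  shows "m2 \<notin> inside (A1 \<union> A3)"
proof -
  note F = theta_facts[OF th]
  have sub: "A3 - {a,b} \<subseteq> inside (A1 \<union> A2)"
  proof
    fix y assume y: "y \<in> A3 - {a,b}"
    have "m3 \<in> inside (A1 \<union> A2) \<longleftrightarrow> y \<in> inside (A1 \<union> A2)"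
      by (rule side_inside[OF arcset_interior_connected[OF F(4)] theta_int3[OF th] m3 y])
    then show "y \<in> inside (A1 \<union> A2)" using in3 by simp
  qed
  have O3: "outside (A1 \<union> A2) \<inter> (A1 \<union> A3) = {}"
  proof (rule ccontr)
    assume "outside (A1 \<union> A2) \<inter> (A1 \<union> A3) \<noteq> {}"
    then obtain y where y: "y \<in> outside (A1 \<union> A2)" "y \<in> A1 \<union> A3" by blast
    have "y \<notin> A1 \<union> A2" using in_outside_not[OF y(1)] .
    then have "y \<in> A3 - {a,b}" using y(2) F(8,9) by blast
    then have "y \<in> inside (A1 \<union> A2)" using sub by blast
    then show False using in_inside_outside y(1) by blast
  qed
  have "outside (A1 \<union> A2) \<subseteq> outside (A1 \<union> A3)"
    by (rule subset_outside) (use cycle_facts[OF F(2,3,5,1)] O3 in auto)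
  then have "closure (outside (A1 \<union> A2)) \<subseteq> closure (outside (A1 \<union> A3))"
    by (rule closure_mono)
  moreover have "m2 \<in> closure (outside (A1 \<union> A2))"
    using cycle_facts(6)[OF F(2,3,5,1)] m2 by simp
  ultimately have "m2 \<in> outside (A1 \<union> A3) \<union> (A1 \<union> A3)"
    using cycle_facts(6)[OF F(2,4,6,1)] by blast
  moreover have "m2 \<notin> A1 \<union> A3" using m2 theta_int3[OF theta_perm(2)[OF th]] by blast
  ultimately show ?thesis using in_inside_outside by blast
qed

lemma transfer_inside:
  assumes "connected U" "U \<inter> S = {}" "x \<in> U" "x \<in> inside S" "m \<in> closure U" "m \<notin> S"
    and "closure (inside S) = inside S \<union> S"
  shows "m \<in> inside S"
proof -
  have "U \<subseteq> inside S" using side_inside[OF assms(1,2,3)] assms(4) by blast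
  then have "closure U \<subseteq> closure (inside S)" by (rule closure_mono)
  then have "m \<in> inside S \<union> S" using assms(5,7) by blast
  then show ?thesis using assms(6) by blast
qed

lemma theta_atleast:
  assumes th: "theta a b A1 A2 A3" and m1: "m1 \<in> A1 - {a,b}" and m2: "m2 \<in> A2 - {a,b}"
    and m3: "m3 \<in> A3 - {a,b}"
  shows "m3 \<in> inside (A1 \<union> A2) \<or> m2 \<in> inside (A1 \<union> A3) \<or> m1 \<in> inside (A2 \<union> A3)"
proof (rule ccontr)
  assume nc: "\<not> ?thesis"
  note F = theta_facts[OF th]
  note C12 = cycle_facts[OF F(2,3,5,1)]
  obtain x where x: "x \<in> inside (A1 \<union> A2)" using C12(1) by blast
  have xn: "x \<notin> A1 \<union> A2" using in_inside_not[OF x] .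
  have dis: "inside (A1 \<union> A2) \<inter> A3 = {}"
  proof (rule ccontr)
    assume "inside (A1 \<union> A2) \<inter> A3 \<noteq> {}"
    then obtain y where y: "y \<in> inside (A1 \<union> A2)" "y \<in> A3" by blast
    have "y \<notin> A1 \<union> A2" using in_inside_not[OF y(1)] .
    then have y3: "y \<in> A3 - {a,b}" using y(2) F(8,9) by blast
    have "y \<in> inside (A1 \<union> A2) \<longleftrightarrow> m3 \<in> inside (A1 \<union> A2)"
      by (rule side_inside[OF arcset_interior_connected[OF F(4)] theta_int3[OF th] y3 m3])
    then show False using nc y(1) by blast
  qed
  have dis13: "inside (A1 \<union> A2) \<inter> (A1 \<union> A3) = {}"
    using dis inside_no_overlap[of "A1 \<union> A2"] by blast
  have dis23: "inside (A1 \<union> A2) \<inter> (A2 \<union> A3) = {}"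
    using dis inside_no_overlap[of "A1 \<union> A2"] by blast
  have x3: "x \<notin> A3" using x dis by blast
  have m2c: "m2 \<in> closure (inside (A1 \<union> A2))" using C12(5) m2 by simp
  have m1c: "m1 \<in> closure (inside (A1 \<union> A2))" using C12(5) m1 by simp
  have m2n: "m2 \<notin> A1 \<union> A3" using m2 theta_int3[OF theta_perm(2)[OF th]] by blast
  have m1n: "m1 \<notin> A2 \<union> A3" using m1 theta_int3[OF theta_perm(3)[OF th]] by blast
  have "x \<notin> A1 \<union> A2 \<union> A3" using xn x3 by blast
  from theta_J[OF th this x]
  show False
  proof
    assume "x \<in> inside (A1 \<union> A3)"
    then have "m2 \<in> inside (A1 \<union> A3)"
      by (intro transfer_inside[OF C12(2) dis13 x _ m2c m2n cycle_facts(5)[OF F(2,4,6,1)]])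
    then show False using nc by blast
  next
    assume "x \<in> inside (A2 \<union> A3)"
    then have "m1 \<in> inside (A2 \<union> A3)"
      by (intro transfer_inside[OF C12(2) dis23 x _ m1c m1n cycle_facts(5)[OF F(3,4,7,1)]])
    then show False using nc by blast
  qed
qed

lemma theta_case1:
  assumes th: "theta a b A1 A2 A3" and m1: "m1 \<in> A1 - {a,b}" and m2: "m2 \<in> A2 - {a,b}"
    and m3: "m3 \<in> A3 - {a,b}" and x: "x \<notin> A1 \<union> A2 \<union> A3"
    and D1: "connected D1" "x \<in> D1" "m1 \<in> D1" "D1 \<inter> (A2 \<union> A3) = {}"
    and D2: "connected D2" "x \<in> D2" "m2 \<in> D2" "D2 \<inter> (A1 \<union> A3) = {}"
    and D3: "connected D3" "x \<in> D3" "m3 \<in> D3" "D3 \<inter> (A1 \<union> A2) = {}"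
    and in3: "m3 \<in> inside (A1 \<union> A2)"
  shows False
proof -
  have "x \<in> inside (A1 \<union> A2)" using side_inside[OF D3(1,4,2,3)] in3 by blast
  from theta_J[OF th x this]
  show False
  proof
    assume "x \<in> inside (A1 \<union> A3)"
    then have "m2 \<in> inside (A1 \<union> A3)" using side_inside[OF D2(1,4,2,3)] by blast
    then show False using theta_A[OF th m3 m2 in3] by blast
  next
    assume "x \<in> inside (A2 \<union> A3)"
    then have "m1 \<in> inside (A2 \<union> A3)" using side_inside[OF D1(1,4,2,3)] by blast
    moreover have "m3 \<in> inside (A2 \<union> A1)" using in3 by (simp add: Un_commute)
    ultimately show False using theta_A[OF theta_perm(1)[OF th] m3 m1] by blast
  qed
qed

lemma theta_final:
  assumes th: "theta a b A1 A2 A3" and m1: "m1 \<in> A1 - {a,b}" and m2: "m2 \<in> A2 - {a,b}"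
    and m3: "m3 \<in> A3 - {a,b}" and x: "x \<notin> A1 \<union> A2 \<union> A3"
    and D1: "connected D1" "x \<in> D1" "m1 \<in> D1" "D1 \<inter> (A2 \<union> A3) = {}"
    and D2: "connected D2" "x \<in> D2" "m2 \<in> D2" "D2 \<inter> (A1 \<union> A3) = {}"
    and D3: "connected D3" "x \<in> D3" "m3 \<in> D3" "D3 \<inter> (A1 \<union> A2) = {}"
  shows False
proof -
  have x132: "x \<notin> A1 \<union> A3 \<union> A2" and x231: "x \<notin> A2 \<union> A3 \<union> A1" using x by blast+
  have D1': "D1 \<inter> (A3 \<union> A2) = {}" using D1(4) by blast
  have D2': "D2 \<inter> (A3 \<union> A1) = {}" using D2(4) by blast
  have D3': "D3 \<inter> (A2 \<union> A1) = {}" using D3(4) by blast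
  from theta_atleast[OF th m1 m2 m3]
  consider "m3 \<in> inside (A1 \<union> A2)" | "m2 \<in> inside (A1 \<union> A3)" | "m1 \<in> inside (A2 \<union> A3)"
    by blast
  then show False
  proof cases
    case 1 then show ?thesis using theta_case1[OF th m1 m2 m3 x D1 D2 D3] by blast
  next
    case 2 then show ?thesis
      using theta_case1[OF theta_perm(2)[OF th] m1 m3 m2 x132 D1(1-3) D1' D3(1-3) D3(4) D2(1-3) D2(4)]
      by blast
  next
    case 3 then show ?thesis
      using theta_case1[OF theta_perm(3)[OF th] m2 m3 m1 x231 D2(1-3) D2' D3(1-3) D3' D1(1-3) D1(4)]
      by blast
  qed
qed




locale emb =
  fixes V :: "'a set" and E :: "'a set set" and p :: "'a \<Rightarrow> complex" and \<gamma> :: "'a set \<Rightarrow> real \<Rightarrow> complex"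
  assumes injp: "inj_on p V"
    and EV: "\<And>e. e \<in> E \<Longrightarrow> e \<subseteq> V"
    and arcs: "\<And>e. e \<in> E \<Longrightarrow> arc (\<gamma> e) \<and>
           (\<exists>u v. e = {u, v} \<and> pathstart (\<gamma> e) = p u \<and> pathfinish (\<gamma> e) = p v) \<and>
           path_image (\<gamma> e) \<inter> p ` V \<subseteq> p ` e"
    and cross: "\<And>e f. e \<in> E \<Longrightarrow> f \<in> E \<Longrightarrow> e \<noteq> f \<Longrightarrow>
           path_image (\<gamma> e) \<inter> path_image (\<gamma> f) \<subseteq> p ` (e \<inter> f)"

begin
lemma orient:
  assumes "{x,y} \<in> E"
  shows "\<exists>g. arc g \<and> pathstart g = p x \<and> pathfinish g = p y \<and> path_image g = path_image (\<gamma> {x,y})"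
proof -
  obtain u v where uv: "{x,y} = {u,v}" "pathstart (\<gamma> {x,y}) = p u" "pathfinish (\<gamma> {x,y}) = p v"
    and a: "arc (\<gamma> {x,y})" using arcs[OF assms] by blast
  from uv(1) have "(u = x \<and> v = y) \<or> (u = y \<and> v = x)" by (metis doubleton_eq_iff)
  then show ?thesis
  proof
    assume "u = x \<and> v = y" then show ?thesis using uv a by blast
  next
    assume "u = y \<and> v = x" then show ?thesis using uv a
      by (intro exI[of _ "reversepath (\<gamma> {x,y})"]) (auto simp: arc_reversepath path_image_reversepath)
  qed
qed

end

context emb begin
lemma endpoint_in:
  assumes "{x,y} \<in> E" shows "p x \<in> path_image (\<gamma> {x,y})" "p y \<in> path_image (\<gamma> {x,y})"
proof -
  obtain g where g: "arc g" "pathstart g = p x" "pathfinish g = p y" "path_image g = path_image (\<gamma> {x,y})"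
    using orient[OF assms] by blast
  show "p x \<in> path_image (\<gamma> {x,y})" using pathstart_in_path_image[of g] g by simp
  show "p y \<in> path_image (\<gamma> {x,y})" using pathfinish_in_path_image[of g] g by simp
qed

end

context emb begin
lemma vertex_off:
  assumes "e \<in> E" "z \<in> V" "p z \<in> path_image (\<gamma> e)" shows "z \<in> e"
proof -
  have "p z \<in> p ` e" using arcs[OF assms(1)] assms(2,3) by blast
  then obtain w where "w \<in> e" "p z = p w" by blast
  then show ?thesis using injp EV[OF assms(1)] assms(2) by (metis inj_onD subsetD)
qed

end

context emb begin
lemma img_conn: "e \<in> E \<Longrightarrow> connected (path_image (\<gamma> e))"
  using arcs by (auto intro: connected_path_image arc_imp_path)

end

context emb begin
lemma two_path_arcset:
  assumes e1: "{a1,b} \<in> E" and e2: "{a2,b} \<in> E" and d: "a1 \<noteq> a2" "a1 \<noteq> b" "a2 \<noteq> b"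
  shows "arcset (p a1) (p a2) (path_image (\<gamma> {a1,b}) \<union> path_image (\<gamma> {a2,b}))"
proof -
  obtain g1 where g1: "arc g1" "pathstart g1 = p a1" "pathfinish g1 = p b" "path_image g1 = path_image (\<gamma> {a1,b})"
    using orient[OF e1] by blast
  have e2': "{b,a2} \<in> E" using e2 by (simp add: insert_commute)
  obtain g2 where g2: "arc g2" "pathstart g2 = p b" "pathfinish g2 = p a2" "path_image g2 = path_image (\<gamma> {a2,b})"
    using orient[OF e2'] by (auto simp: insert_commute)
  have ne: "{a1,b} \<noteq> {a2,b}" using d by (auto simp: doubleton_eq_iff)
  have "path_image g1 \<inter> path_image g2 \<subseteq> p ` ({a1,b} \<inter> {a2,b})"
    using cross[OF e1 e2 ne] g1 g2 by simp
  also have "{a1,b} \<inter> {a2,b} = {b}" using d by auto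
  finally have "path_image g1 \<inter> path_image g2 \<subseteq> {pathstart g2}" using g2 by simp
  then have "arc (g1 +++ g2)" using g1 g2 by (intro arc_join) auto
  then show ?thesis unfolding arcset_def using g1 g2
    by (intro exI[of _ "g1 +++ g2"]) (simp add: path_image_join)
qed

end

context emb begin
lemma disj_edges:
  assumes "e \<in> E" "f \<in> E" "e \<inter> f = {}"
  shows "path_image (\<gamma> e) \<inter> path_image (\<gamma> f) = {}"
proof (cases "e = f")
  case True
  then have "e = {}" using assms by auto
  then show ?thesis using arcs[OF assms(1)] by auto
next
  case False
  then show ?thesis using cross[OF assms(1,2)] assms(3) by auto
qed

end

context emb begin
lemma no_K33:
  assumes V: "a1 \<in> V" "a2 \<in> V" "a3 \<in> V" "b1 \<in> V" "b2 \<in> V" "b3 \<in> V"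
    and dist: "distinct [a1,a2,a3,b1,b2,b3]"
    and E: "{a1,b1} \<in> E" "{a1,b2} \<in> E" "{a1,b3} \<in> E"
           "{a2,b1} \<in> E" "{a2,b2} \<in> E" "{a2,b3} \<in> E"
           "{a3,b1} \<in> E" "{a3,b2} \<in> E" "{a3,b3} \<in> E"
  shows False
proof -
  define I where "I = (\<lambda>e. path_image (\<gamma> e))"
  define A1 where "A1 = I {a1,b1} \<union> I {a2,b1}"
  define A2 where "A2 = I {a1,b2} \<union> I {a2,b2}"
  define A3 where "A3 = I {a1,b3} \<union> I {a2,b3}"
  have ar: "arcset (p a1) (p a2) A1" "arcset (p a1) (p a2) A2" "arcset (p a1) (p a2) A3"
    unfolding A1_def A2_def A3_def I_def using dist
    by (auto intro!: two_path_arcset E)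
  have pinj: "\<And>x y. x \<in> V \<Longrightarrow> y \<in> V \<Longrightarrow> x \<noteq> y \<Longrightarrow> p x \<noteq> p y"
    using injp by (auto simp: inj_on_def)
  have int_gen: "\<And>b b'. {a1,b} \<in> E \<Longrightarrow> {a2,b} \<in> E \<Longrightarrow> {a1,b'} \<in> E \<Longrightarrow> {a2,b'} \<in> E \<Longrightarrow>
      b \<noteq> b' \<Longrightarrow> b \<noteq> a1 \<Longrightarrow> b \<noteq> a2 \<Longrightarrow> b' \<noteq> a1 \<Longrightarrow> b' \<noteq> a2 \<Longrightarrow>
      (I {a1,b} \<union> I {a2,b}) \<inter> (I {a1,b'} \<union> I {a2,b'}) \<subseteq> {p a1, p a2}"
  proof -
    fix b b' assume h: "{a1,b} \<in> E" "{a2,b} \<in> E" "{a1,b'} \<in> E" "{a2,b'} \<in> E"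
      "b \<noteq> b'" "b \<noteq> a1" "b \<noteq> a2" "b' \<noteq> a1" "b' \<noteq> a2"
    have a12: "a1 \<noteq> a2" using dist by auto
    have 1: "I {a1,b} \<inter> I {a1,b'} \<subseteq> p ` ({a1,b} \<inter> {a1,b'})"
      unfolding I_def by (rule cross) (use h in \<open>auto simp: doubleton_eq_iff\<close>)
    have 2: "I {a1,b} \<inter> I {a2,b'} \<subseteq> p ` ({a1,b} \<inter> {a2,b'})"
      unfolding I_def by (rule cross) (use h a12 in \<open>auto simp: doubleton_eq_iff\<close>)
    have 3: "I {a2,b} \<inter> I {a1,b'} \<subseteq> p ` ({a2,b} \<inter> {a1,b'})"
      unfolding I_def by (rule cross) (use h a12 in \<open>auto simp: doubleton_eq_iff\<close>)
    have 4: "I {a2,b} \<inter> I {a2,b'} \<subseteq> p ` ({a2,b} \<inter> {a2,b'})"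
      unfolding I_def by (rule cross) (use h in \<open>auto simp: doubleton_eq_iff\<close>)
    have "{a1,b} \<inter> {a1,b'} = {a1}" "{a1,b} \<inter> {a2,b'} = {}" "{a2,b} \<inter> {a1,b'} = {}" "{a2,b} \<inter> {a2,b'} = {a2}"
      using h a12 by auto
    then show "(I {a1,b} \<union> I {a2,b}) \<inter> (I {a1,b'} \<union> I {a2,b'}) \<subseteq> {p a1, p a2}"
      using 1 2 3 4 by auto
  qed
  have ends: "p a1 \<in> A1" "p a2 \<in> A1" "p a1 \<in> A2" "p a2 \<in> A2" "p a1 \<in> A3" "p a2 \<in> A3"
    using ar arcset_ends by auto
  have th: "theta (p a1) (p a2) A1 A2 A3"
    unfolding theta_def
  proof (intro conjI ar)
    show "p a1 \<noteq> p a2" using pinj V dist by auto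
    show "A1 \<inter> A2 = {p a1, p a2}"
      using int_gen[OF E(1,4,2,5)] dist ends unfolding A1_def A2_def by auto
    show "A1 \<inter> A3 = {p a1, p a2}"
      using int_gen[OF E(1,4,3,6)] dist ends unfolding A1_def A3_def by auto
    show "A2 \<inter> A3 = {p a1, p a2}"
      using int_gen[OF E(2,5,3,6)] dist ends unfolding A2_def A3_def by auto
  qed
  have m: "p b1 \<in> A1 - {p a1, p a2}" "p b2 \<in> A2 - {p a1, p a2}" "p b3 \<in> A3 - {p a1, p a2}"
    using endpoint_in[OF E(1)] endpoint_in[OF E(2)] endpoint_in[OF E(3)] pinj V dist
    unfolding A1_def A2_def A3_def I_def by auto
  have x: "p a3 \<notin> A1 \<union> A2 \<union> A3"
  proof
    assume "p a3 \<in> A1 \<union> A2 \<union> A3"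
    then have "a3 \<in> {a1,b1} \<or> a3 \<in> {a2,b1} \<or> a3 \<in> {a1,b2} \<or> a3 \<in> {a2,b2} \<or> a3 \<in> {a1,b3} \<or> a3 \<in> {a2,b3}"
      unfolding A1_def A2_def A3_def I_def using vertex_off E V(3) by blast
    then show False using dist by auto
  qed
  have D: "\<And>b. {a3,b} \<in> E \<Longrightarrow> connected (I {a3,b}) \<and> p a3 \<in> I {a3,b} \<and> p b \<in> I {a3,b}"
    unfolding I_def using img_conn endpoint_in by blast
  have dj: "\<And>b c. {a3,b} \<in> E \<Longrightarrow> {c,b'} \<in> E \<Longrightarrow> a3 \<noteq> c \<Longrightarrow> a3 \<noteq> b' \<Longrightarrow> b \<noteq> c \<Longrightarrow> b \<noteq> b'
      \<Longrightarrow> I {a3,b} \<inter> I {c,b'} = {}" for b'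
    unfolding I_def by (rule disj_edges) auto
  show False
  proof (rule theta_final[OF th m x])
    show "connected (I {a3,b1})" "p a3 \<in> I {a3,b1}" "p b1 \<in> I {a3,b1}" using D[OF E(7)] by auto
    show "connected (I {a3,b2})" "p a3 \<in> I {a3,b2}" "p b2 \<in> I {a3,b2}" using D[OF E(8)] by auto
    show "connected (I {a3,b3})" "p a3 \<in> I {a3,b3}" "p b3 \<in> I {a3,b3}" using D[OF E(9)] by auto
    show "I {a3,b1} \<inter> (A2 \<union> A3) = {}" unfolding A2_def A3_def
      using dj[OF E(7) E(2)] dj[OF E(7) E(5)] dj[OF E(7) E(3)] dj[OF E(7) E(6)] dist by auto
    show "I {a3,b2} \<inter> (A1 \<union> A3) = {}" unfolding A1_def A3_def
      using dj[OF E(8) E(1)] dj[OF E(8) E(4)] dj[OF E(8) E(3)] dj[OF E(8) E(6)] dist by auto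
    show "I {a3,b3} \<inter> (A1 \<union> A2) = {}" unfolding A1_def A2_def
      using dj[OF E(9) E(1)] dj[OF E(9) E(4)] dj[OF E(9) E(2)] dj[OF E(9) E(5)] dist by auto
  qed
qed



end

lemma planar_no_K33:
  assumes "planar_graph V E"
    and "a1 \<in> V" "a2 \<in> V" "a3 \<in> V" "b1 \<in> V" "b2 \<in> V" "b3 \<in> V"
    and "distinct [a1,a2,a3,b1,b2,b3]"
    and "{a1,b1} \<in> E" "{a1,b2} \<in> E" "{a1,b3} \<in> E"
        "{a2,b1} \<in> E" "{a2,b2} \<in> E" "{a2,b3} \<in> E"
        "{a3,b1} \<in> E" "{a3,b2} \<in> E" "{a3,b3} \<in> E"
  shows False
proof -
  obtain p :: "'a \<Rightarrow> complex" and \<gamma> where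
    injp: "inj_on p V" and
    arcs: "\<forall>e\<in>E. arc (\<gamma> e) \<and>
           (\<exists>u v. e = {u, v} \<and> pathstart (\<gamma> e) = p u \<and> pathfinish (\<gamma> e) = p v) \<and>
           path_image (\<gamma> e) \<inter> p ` V \<subseteq> p ` e" and
    cross: "\<forall>e\<in>E. \<forall>f\<in>E. e \<noteq> f \<longrightarrow> path_image (\<gamma> e) \<inter> path_image (\<gamma> f) \<subseteq> p ` (e \<inter> f)"
    using assms(1) unfolding planar_graph_def by blast
  have sg: "\<forall>e\<in>E. \<exists>u v. u \<in> V \<and> v \<in> V \<and> u \<noteq> v \<and> e = {u, v}"
    using assms(1) unfolding planar_graph_def simple_graph_def by (elim conjE)
  have EV: "\<And>e. e \<in> E \<Longrightarrow> e \<subseteq> V"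
  proof -
    fix e assume "e \<in> E"
    then obtain u v where "u \<in> V" "v \<in> V" "e = {u,v}" using sg by blast
    then show "e \<subseteq> V" by simp
  qed
  have "emb V E p \<gamma>"
  proof (rule emb.intro[OF injp EV])
    fix e assume "e \<in> E"
    then show "arc (\<gamma> e) \<and>
           (\<exists>u v. e = {u, v} \<and> pathstart (\<gamma> e) = p u \<and> pathfinish (\<gamma> e) = p v) \<and>
           path_image (\<gamma> e) \<inter> p ` V \<subseteq> p ` e" using arcs by blast
  next
    fix e f assume "e \<in> E" "f \<in> E" "e \<noteq> f"
    then show "path_image (\<gamma> e) \<inter> path_image (\<gamma> f) \<subseteq> p ` (e \<inter> f)" using cross by blast
  qed
  then show False by (rule emb.no_K33[OF _ assms(2-)])
qed



lemma card_le_2I: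
  assumes "finite A" and "\<And>x y z. x \<in> A \<Longrightarrow> y \<in> A \<Longrightarrow> z \<in> A \<Longrightarrow> x \<noteq> y \<Longrightarrow> x \<noteq> z \<Longrightarrow> y \<noteq> z \<Longrightarrow> False"
  shows "card A \<le> 2"
proof (rule ccontr)
  assume "\<not> card A \<le> 2"
  then have c: "card A \<ge> 3" by simp
  then have "A \<noteq> {}" by auto
  then obtain x where x: "x \<in> A" by blast
  have c1: "card (A - {x}) \<ge> 2" using c x assms(1) by simp
  then have "A - {x} \<noteq> {}" by (metis card.empty not_numeral_le_zero)
  then obtain y where y: "y \<in> A - {x}" by blast
  have c2: "card (A - {x} - {y}) \<ge> 1" using c1 y assms(1) by simp
  then have "A - {x} - {y} \<noteq> {}" by (metis card.empty not_one_le_zero)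
  then obtain z where z: "z \<in> A - {x} - {y}" by blast
  show False using assms(2)[of x y z] x y z by blast
qed

lemma nbhd_mem: "x \<in> closed_nbhd E v \<longleftrightarrow> x = v \<or> {x,v} \<in> E"
  by (simp add: closed_nbhd_def)

lemma teach_set:
  fixes V :: "'a set" and E :: "'a set set"
  assumes finV: "finite V"
    and NV: "\<And>v. v \<in> V \<Longrightarrow> closed_nbhd E v \<subseteq> V"
    and noK: "\<And>a1 a2 a3 b1 b2 b3. a1 \<in> V \<Longrightarrow> a2 \<in> V \<Longrightarrow> a3 \<in> V \<Longrightarrow> b1 \<in> V \<Longrightarrow> b2 \<in> V \<Longrightarrow> b3 \<in> V
       \<Longrightarrow> distinct [a1,a2,a3,b1,b2,b3] \<Longrightarrow>
       {a1,b1} \<in> E \<Longrightarrow> {a1,b2} \<in> E \<Longrightarrow> {a1,b3} \<in> E \<Longrightarrow>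
       {a2,b1} \<in> E \<Longrightarrow> {a2,b2} \<in> E \<Longrightarrow> {a2,b3} \<in> E \<Longrightarrow>
       {a3,b1} \<in> E \<Longrightarrow> {a3,b2} \<in> E \<Longrightarrow> {a3,b3} \<in> E \<Longrightarrow> False"
    and v: "v \<in> V"
  shows "\<exists>S. S \<subseteq> closed_nbhd E v \<and> v \<in> S \<and> card S \<le> 7 \<and>
     (\<forall>u. u \<in> V \<longrightarrow> u \<noteq> v \<longrightarrow> {u,v} \<in> E \<longrightarrow> \<not> closed_nbhd E v \<subseteq> closed_nbhd E u \<longrightarrow>
          \<not> S \<subseteq> closed_nbhd E u)"
proof -
  let ?N = "closed_nbhd E"
  define Bad where "Bad = {u \<in> V. u \<noteq> v \<and> {u,v} \<in> E \<and> \<not> ?N v \<subseteq> ?N u}"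
  define f where "f u = (SOME w. w \<in> ?N v \<and> w \<notin> ?N u)" for u
  have f: "f u \<in> ?N v" "f u \<notin> ?N u" if "u \<in> Bad" for u
  proof -
    have "\<exists>w. w \<in> ?N v \<and> w \<notin> ?N u" using that by (auto simp: Bad_def)
    then show "f u \<in> ?N v" "f u \<notin> ?N u" unfolding f_def by (metis (no_types, lifting) someI_ex)+
  qed
  have vN: "v \<in> ?N v" by (simp add: nbhd_mem)
  have finN: "finite (?N v)" using NV[OF v] finV finite_subset by blast
  show ?thesis
  proof (cases "Bad = {}")
    case True
    then show ?thesis using vN by (intro exI[of _ "{v}"]) (auto simp: Bad_def)
  next
    case False
    then obtain u1 where u1: "u1 \<in> Bad" by blast
    define w1 where "w1 = f u1"
    define Bad1 where "Bad1 = {u \<in> Bad. w1 \<in> ?N u}"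
    show ?thesis
    proof (cases "Bad1 = {}")
      case True
      show ?thesis
      proof (intro exI[of _ "{v,w1}"] conjI allI impI)
        show "{v,w1} \<subseteq> ?N v" using vN f(1)[OF u1] w1_def by simp
        show "card {v,w1} \<le> 7" by (rule order_trans[OF card_insert_le_m1]) auto
        fix u assume "u \<in> V" "u \<noteq> v" "{u,v} \<in> E" "\<not> ?N v \<subseteq> ?N u"
        then have "u \<in> Bad" by (simp add: Bad_def)
        then have "w1 \<notin> ?N u" using True Bad1_def by blast
        then show "\<not> {v,w1} \<subseteq> ?N u" by simp
      qed simp
    next
      case False
      then obtain u2 where u2: "u2 \<in> Bad1" by blast
      define w2 where "w2 = f u2"
      define Bad2 where "Bad2 = {u \<in> Bad1. w2 \<in> ?N u}"
      define S where "S = {v,w1,w2} \<union> f ` Bad2"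
      have u2B: "u2 \<in> Bad" using u2 Bad1_def by simp
      have w1N: "w1 \<in> ?N v" "w1 \<notin> ?N u1" using f[OF u1] w1_def by auto
      have w2N: "w2 \<in> ?N v" "w2 \<notin> ?N u2" using f[OF u2B] w2_def by auto
      have vw1: "v \<noteq> w1" using w1N u1 by (auto simp: Bad_def nbhd_mem insert_commute)
      have vw2: "v \<noteq> w2" using w2N u2B by (auto simp: Bad_def nbhd_mem insert_commute)
      have w12: "w1 \<noteq> w2" using w2N u2 by (auto simp: Bad1_def)
      have w1V: "w1 \<in> V" and w2V: "w2 \<in> V" using w1N w2N NV[OF v] by auto
      have finB: "finite Bad" unfolding Bad_def using finV by simp
      have finB2: "finite Bad2" unfolding Bad2_def Bad1_def using finB by simp
      have pu: "u \<in> V \<and> u \<noteq> v \<and> {u,v} \<in> E \<and> {u,w1} \<in> E \<and> {u,w2} \<in> E"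
        if "u \<in> Bad2 - {w1,w2}" for u
        using that by (auto simp: Bad2_def Bad1_def Bad_def nbhd_mem insert_commute)
      have c2: "card (Bad2 - {w1,w2}) \<le> 2"
      proof (rule card_le_2I)
        show "finite (Bad2 - {w1,w2})" using finB2 by simp
        fix x y z assume h: "x \<in> Bad2 - {w1,w2}" "y \<in> Bad2 - {w1,w2}" "z \<in> Bad2 - {w1,w2}"
          "x \<noteq> y" "x \<noteq> z" "y \<noteq> z"
        have d: "distinct [x,y,z,v,w1,w2]" using h pu[OF h(1)] pu[OF h(2)] pu[OF h(3)] vw1 vw2 w12 by auto
        show False
          by (rule noK[OF _ _ _ v w1V w2V d]) (use pu[OF h(1)] pu[OF h(2)] pu[OF h(3)] in auto)
      qed
      have "card Bad2 \<le> card ((Bad2 - {w1,w2}) \<union> {w1,w2})"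
        by (rule card_mono) (use finB2 in auto)
      also have "\<dots> \<le> card (Bad2 - {w1,w2}) + card {w1,w2}" by (rule card_Un_le)
      also have "card {w1,w2} = 2" using w12 by simp
      finally have cB2: "card Bad2 \<le> 4" using c2 by simp
      have "card S \<le> card {v,w1,w2} + card (f ` Bad2)" unfolding S_def by (rule card_Un_le)
      also have "card {v,w1,w2} \<le> 3" by (simp add: card_insert_le_m1 le_SucI)
      also have "card (f ` Bad2) \<le> 4" using card_image_le[OF finB2, of f] cB2 by simp
      finally have cS: "card S \<le> 7" by simp
      show ?thesis
      proof (intro exI[of _ S] conjI allI impI cS)
        have "f ` Bad2 \<subseteq> ?N v" using f(1) by (auto simp: Bad2_def Bad1_def)
        then show "S \<subseteq> ?N v" unfolding S_def using vN w1N w2N by auto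
        show "v \<in> S" by (simp add: S_def)
        fix u assume "u \<in> V" "u \<noteq> v" "{u,v} \<in> E" "\<not> ?N v \<subseteq> ?N u"
        then have uB: "u \<in> Bad" by (simp add: Bad_def)
        show "\<not> S \<subseteq> ?N u"
        proof (cases "u \<in> Bad1")
          case False then show ?thesis using uB by (auto simp: Bad1_def S_def)
        next
          case True
          show ?thesis
          proof (cases "u \<in> Bad2")
            case False then show ?thesis using True by (auto simp: Bad2_def S_def)
          next
            case True
            then have "f u \<in> S" "f u \<notin> ?N u" using f(2)[OF uB] by (auto simp: S_def)
            then show ?thesis by blast
          qed
        qed
      qed
    qed
  qed
qed



theorem theorem6:
  fixes V :: "'a set" and E :: "'a set set"
  assumes "planar_graph V E"
  shows "NCTD_pos ((closed_nbhd E) ` V) \<le> 7"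
proof -
  let ?N = "closed_nbhd E"
  let ?B = "?N ` V"
  have sgr: "simple_graph V E" using assms unfolding planar_graph_def by (elim conjE)
  have sg: "\<forall>e\<in>E. \<exists>u v. u \<in> V \<and> v \<in> V \<and> u \<noteq> v \<and> e = {u, v}"
    using sgr unfolding simple_graph_def by (elim conjE)
  have finV: "finite V" using sgr unfolding simple_graph_def by (elim conjE)
  have NV: "?N v \<subseteq> V" if "v \<in> V" for v
  proof
    fix x assume "x \<in> ?N v"
    then have "x = v \<or> {x,v} \<in> E" by (simp add: nbhd_mem)
    then show "x \<in> V"
    proof
      assume "{x,v} \<in> E"
      then obtain a b where "a \<in> V" "b \<in> V" "{x,v} = {a,b}" using sg by blast
      then show "x \<in> V" by (metis doubleton_eq_iff)
    qed (use that in simp)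
  qed
  have noK: "False" if "a1 \<in> V" "a2 \<in> V" "a3 \<in> V" "b1 \<in> V" "b2 \<in> V" "b3 \<in> V"
       "distinct [a1,a2,a3,b1,b2,b3]"
       "{a1,b1} \<in> E" "{a1,b2} \<in> E" "{a1,b3} \<in> E"
       "{a2,b1} \<in> E" "{a2,b2} \<in> E" "{a2,b3} \<in> E"
       "{a3,b1} \<in> E" "{a3,b2} \<in> E" "{a3,b3} \<in> E" for a1 a2 a3 b1 b2 b3
    by (rule planar_no_K33[OF assms that])
  define P where "P v S \<longleftrightarrow> S \<subseteq> ?N v \<and> v \<in> S \<and> card S \<le> 7 \<and>
     (\<forall>u. u \<in> V \<longrightarrow> u \<noteq> v \<longrightarrow> {u,v} \<in> E \<longrightarrow> \<not> ?N v \<subseteq> ?N u \<longrightarrow> \<not> S \<subseteq> ?N u)" for v S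
  define Sv where "Sv v = (SOME S. P v S)" for v
  have PS: "P v (Sv v)" if "v \<in> V" for v
  proof -
    have "\<exists>S. P v S" unfolding P_def by (rule teach_set[OF finV NV noK that])
    then show ?thesis unfolding Sv_def by (rule someI_ex)
  qed
  define c where "c B = (SOME v. v \<in> V \<and> B = ?N v)" for B
  have cB: "c B \<in> V \<and> B = ?N (c B)" if "B \<in> ?B" for B
  proof -
    have "\<exists>v. v \<in> V \<and> B = ?N v" using that by blast
    then show ?thesis unfolding c_def by (rule someI_ex)
  qed
  define T where "T B = Sv (c B)" for B
  have pos: "positive_teaching_map ?B T"
    unfolding positive_teaching_map_def
  proof
    fix B assume "B \<in> ?B"
    then show "T B \<subseteq> B" using cB PS unfolding T_def P_def by metis
  qed
  have card7: "\<forall>B\<in>?B. card (T B) \<le> 7"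
    using cB PS unfolding T_def P_def by blast
  have nc: "non_clashing ?B T"
    unfolding non_clashing_def
  proof (intro ballI impI)
    fix B B' assume B: "B \<in> ?B" and B': "B' \<in> ?B" and ne: "B \<noteq> B'"
    define a where "a = c B"
    define b where "b = c B'"
    have a: "a \<in> V" "B = ?N a" using cB[OF B] a_def by auto
    have b: "b \<in> V" "B' = ?N b" using cB[OF B'] b_def by auto
    have Pa: "P a (T B)" using PS[OF a(1)] a_def T_def by simp
    have Pb: "P b (T B')" using PS[OF b(1)] b_def T_def by simp
    have ab: "a \<noteq> b" using a b ne by auto
    show "\<exists>w\<in>T B \<union> T B'. distinguishes w B B'"
    proof (cases "{a,b} \<in> E")
      case False
      have "a \<in> T B" using Pa P_def by simp
      moreover have "a \<in> B" using a by (simp add: nbhd_mem)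
      moreover have "a \<notin> B'" using b False ab by (simp add: nbhd_mem)
      ultimately show ?thesis unfolding distinguishes_def by blast
    next
      case True
      show ?thesis
      proof (cases "?N a \<subseteq> ?N b")
        case False
        have "{b,a} \<in> E" using True by (simp add: insert_commute)
        then have "\<not> T B \<subseteq> ?N b" using Pa False b(1) ab unfolding P_def by blast
        then obtain w where "w \<in> T B" "w \<notin> B'" using b by blast
        moreover have "w \<in> B" using Pa \<open>w \<in> T B\<close> a unfolding P_def by blast
        ultimately show ?thesis unfolding distinguishes_def by blast
      next
        case True2: True
        then have "\<not> ?N b \<subseteq> ?N a" using a b ne by blast
        then have "\<not> T B' \<subseteq> ?N a" using Pb True a(1) ab unfolding P_def by blast
        then obtain w where "w \<in> T B'" "w \<notin> B" using a by blast
        moreover have "w \<in> B'" using Pb \<open>w \<in> T B'\<close> b unfolding P_def by blast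
        ultimately show ?thesis unfolding distinguishes_def by blast
      qed
    qed
  qed
  show ?thesis unfolding NCTD_pos_def
    by (rule Least_le) (use pos nc card7 in blast)
qed


end
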